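(* Under Algorithm 2(b) below, the decoding event occurs at a given receiver in a given slot if, in that slot, either (a) the receiver has a successful reception which results in its virtual queue being empty; or (b) the receiver has a successful reception and the receiver was a leader at the beginning of the slot.
   Context: Model: a sender broadcasts packets $\mathbf{p}_1,\mathbf{p}_2,\dots$ (vectors over $\mathbb{F}_q$, $q\ge n$, indexed by arrival order) to $n$ receivers over a slotted packet erasure broadcast channel with perfect feedback; in each slot the sender transmits at most one linear combination of queued packets and each receiver either receives it or suffers an erasure. A node's knowledge space is the space of coefficient vectors of linear combinations it can compute; the virtual queue of receiver $j$ has size $\dim$(sender's knowledge space) $-\dim$(receiver $j$'s knowledge space). A node has seen $\mathbf{p}_k$ if it can compute $\mathbf{p}_k+\mathbf{q}$ where $\mathbf{q}$ involves only packets with index greater than $k$. If receiver $r$ has seen $\mathbf{p}_k$, its witness $\mathbf{W}_r(\mathbf{p}_k)$ is the unique linear combination known to $r$ of the form $\mathbf{p}_k+\mathbf{q}$ with $\mathbf{q}$ involving only packets of index greater than $k$ not seen by $r$. A receiver's next unseen packet is its lowest-index unseen packet. Algorithm 2(b): the sender drops a packet once all receivers have seen it. Coding module: let $u_1<\dots<u_m$ be the distinct indices of next unseen packets of receivers whose next unseen packet has arrived, and $R(u_i)$ the set of those receivers whose next unseen packet is $\mathbf{p}_{u_i}$; for $j=1,\dots,m$, with $\mathbf{y}_r=\sum_{i<j}\alpha_i\mathbf{W}_r(\mathbf{p}_{u_i})$ for $r\in R(u_j)$, pick $\alpha_j\in\mathbb{F}_q$ different from the coefficient of $\mathbf{p}_{u_j}$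 in every such $\mathbf{y}_r$; transmit $\sum_i\alpha_i\mathbf{p}_{u_i}$. The decoding event at a receiver is the event that all packets the receiver has seen become decoded by it. A leader is a receiver that has seen the maximum number of packets among all receivers at the given time (there may be several). *)

theory Defs
  imports Complex_Main "HOL-Library.Function_Algebras"
begin

text \<open>Coefficient vectors over the field 'a: functions nat => 'a; packet p_k
  (k >= 1, indexed by arrival order) corresponds to the unit vector unitv k.\<close>

definition scl :: "'a::field \<Rightarrow> (nat \<Rightarrow> 'a) \<Rightarrow> (nat \<Rightarrow> 'a)" where
  "scl a v = (\<lambda>i. a * v i)"

definition kspan :: "(nat \<Rightarrow> 'a::field) set \<Rightarrow> (nat \<Rightarrow> 'a) set" where
  "kspan S = Modules.module.span scl S"

definition kdim :: "(nat \<Rightarrow> 'a::field) set \<Rightarrow> nat" where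
  "kdim S = Vector_Spaces.vector_space.dim scl S"

definition unitv :: "nat \<Rightarrow> nat \<Rightarrow> 'a::field" where
  "unitv k = (\<lambda>i. if i = k then 1 else 0)"

definition sender_space :: "nat \<Rightarrow> (nat \<Rightarrow> 'a::field) set" where
  "sender_space a = kspan (unitv ` {1..a})"

definition vqueue :: "nat \<Rightarrow> (nat \<Rightarrow> 'a::field) set \<Rightarrow> nat" where
  "vqueue a K = kdim (sender_space a :: (nat \<Rightarrow> 'a) set) - kdim K"

text \<open>A node with knowledge space K has seen p_k: it can compute p_k + q with q
  involving only packets of index > k.\<close>
definition seen :: "(nat \<Rightarrow> 'a::field) set \<Rightarrow> nat \<Rightarrow> bool" where
  "seen K k \<longleftrightarrow> k \<ge> 1 \<and> (\<exists>v\<in>K. v k = 1 \<and> (\<forall>i<k. v i = 0))"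

definition decoded :: "(nat \<Rightarrow> 'a::field) set \<Rightarrow> nat \<Rightarrow> bool" where
  "decoded K k \<longleftrightarrow> unitv k \<in> K"

definition witness :: "(nat \<Rightarrow> 'a::field) set \<Rightarrow> nat \<Rightarrow> (nat \<Rightarrow> 'a)" where
  "witness K k = (THE w. w \<in> K \<and> w k = 1 \<and> (\<forall>i<k. w i = 0)
                        \<and> (\<forall>i>k. seen K i \<longrightarrow> w i = 0))"

definition next_unseen :: "(nat \<Rightarrow> 'a::field) set \<Rightarrow> nat" where
  "next_unseen K = (LEAST k. k \<ge> 1 \<and> \<not> seen K k)"

definition num_seen :: "(nat \<Rightarrow> 'a::field) set \<Rightarrow> nat" where
  "num_seen K = card {k. seen K k}"

definition is_leader :: "nat \<Rightarrow> (nat \<Rightarrow> (nat \<Rightarrow> 'a::field) set) \<Rightarrow> nat \<Rightarrow> bool" where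
  "is_leader n K j \<longleftrightarrow> j < n \<and> (\<forall>r<n. num_seen (K r) \<le> num_seen (K j))"

definition decoding_event :: "(nat \<Rightarrow> 'a::field) set \<Rightarrow> bool" where
  "decoding_event K \<longleftrightarrow> (\<forall>k. seen K k \<longrightarrow> decoded K k)"

text \<open>Coding module of Algorithm 2(b): with a packets arrived and receiver
  knowledge spaces K r (r < n), c is a possible transmitted coefficient vector.\<close>
definition coding_ok :: "nat \<Rightarrow> nat \<Rightarrow> (nat \<Rightarrow> (nat \<Rightarrow> 'a::field) set) \<Rightarrow> (nat \<Rightarrow> 'a) \<Rightarrow> bool" where
  "coding_ok n a K c \<longleftrightarrow>
    (let U = {next_unseen (K r) | r. r < n \<and> next_unseen (K r) \<le> a};
         R = (\<lambda>u. {r. r < n \<and> next_unseen (K r) = u})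
     in \<exists>\<alpha> :: nat \<Rightarrow> 'a.
          (\<forall>u\<in>U. \<forall>r\<in>R u.
              \<alpha> u \<noteq> (\<Sum>u'\<in>{u'\<in>U. u' < u}. scl (\<alpha> u') (witness (K r) u')) u)
          \<and> c = (\<Sum>u\<in>U. scl (\<alpha> u) (unitv u)))"

text \<open>Knowledge space of receiver r at the beginning of slot t (slots 0,1,...):
  span of the coefficient vectors it received in earlier slots.\<close>
definition know :: "(nat \<Rightarrow> nat \<Rightarrow> bool) \<Rightarrow> (nat \<Rightarrow> nat \<Rightarrow> 'a::field) \<Rightarrow> nat \<Rightarrow> nat \<Rightarrow> (nat \<Rightarrow> 'a) set" where
  "know rcv c t r = kspan {c s | s. s < t \<and> rcv s r}"

end

theory Submission
  imports Defs
begin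


interpretation V: vector_space "scl :: 'a::field \<Rightarrow> (nat \<Rightarrow> 'a) \<Rightarrow> (nat \<Rightarrow> 'a)"
  by unfold_locales (auto simp: scl_def algebra_simps)

lemma kspan_V: "kspan = V.span" by (rule ext) (simp add: kspan_def)
lemma kdim_V: "kdim = V.dim" by (rule ext) (simp add: kdim_def)

lemma sum_fun_apply: "(sum f A) i = (\<Sum>x\<in>A. f x i)"
  by (induction A rule: infinite_finite_induct) auto

lemma scl_apply[simp]: "scl a v i = a * v i" by (simp add: scl_def)




definition VB :: "nat \<Rightarrow> (nat \<Rightarrow> 'a::field) set" where
  "VB b = {v. v 0 = 0 \<and> (\<forall>i>b. v i = 0)}"

lemma VB_subspace: "V.subspace (VB b)"
  by (auto simp: V.subspace_def VB_def scl_def)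

lemma VB_mono: "b \<le> b' \<Longrightarrow> VB b \<subseteq> VB b'"
  by (auto simp: VB_def)

lemma seen_le:
  assumes "K \<subseteq> VB B" "seen K k" shows "1 \<le> k \<and> k \<le> B"
proof -
  from assms(2) obtain v where "v \<in> K" "v k = 1" "k \<ge> 1" unfolding seen_def by auto
  moreover have "v \<in> VB B" using assms(1) \<open>v \<in> K\<close> by blast
  ultimately show ?thesis unfolding VB_def by (cases "k \<le> B") auto
qed

lemma lead_seen:
  assumes "V.subspace K" "v \<in> K" "v \<noteq> 0" "v 0 = 0"
  shows "\<exists>p. p \<ge> 1 \<and> v p \<noteq> 0 \<and> (\<forall>i<p. v i = 0) \<and> seen K p"
proof -
  have ex: "\<exists>i. v i \<noteq> 0" using assms(3) by (auto simp: fun_eq_iff)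
  define p where "p = (LEAST i. v i \<noteq> 0)"
  have vp: "v p \<noteq> 0" unfolding p_def by (rule LeastI_ex[OF ex])
  have below: "\<forall>i<p. v i = 0" unfolding p_def using not_less_Least[where P="\<lambda>i. v i \<noteq> 0"] by blast
  have p1: "p \<ge> 1" using vp assms(4) by (cases p) auto
  define w where "w = scl (inverse (v p)) v"
  have "w \<in> K" unfolding w_def by (rule V.subspace_scale[OF assms(1) assms(2)])
  moreover have "w p = 1" using vp by (simp add: w_def)
  moreover have "\<forall>i<p. w i = 0" using below by (simp add: w_def)
  ultimately have "seen K p" unfolding seen_def using p1 by blast
  then show ?thesis using p1 vp below by blast
qed

definition iswit :: "(nat \<Rightarrow> 'a::field) set \<Rightarrow> nat \<Rightarrow> (nat \<Rightarrow> 'a) \<Rightarrow> bool" where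
  "iswit K k w \<longleftrightarrow> w \<in> K \<and> w k = 1 \<and> (\<forall>i<k. w i = 0) \<and> (\<forall>i>k. seen K i \<longrightarrow> w i = 0)"

lemma wit_exists:
  assumes K: "V.subspace K" "K \<subseteq> VB B"
  shows "seen K k \<Longrightarrow> \<exists>w. iswit K k w"
proof (induction "B - k" arbitrary: k rule: less_induct)
  case less
  have "\<forall>i. \<exists>w. k < i \<and> seen K i \<longrightarrow> iswit K i w"
  proof
    fix i show "\<exists>w. k < i \<and> seen K i \<longrightarrow> iswit K i w"
    proof (cases "k < i \<and> seen K i")
      case True
      then have "i \<le> B" using seen_le[OF K(2)] by blast
      then have "B - i < B - k" using True by arith
      then show ?thesis using less True by blast
    qed auto
  qed
  then obtain W where W: "\<And>i. k < i \<Longrightarrow> seen K i \<Longrightarrow> iswit K i (W i)" by metis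
  from less.prems obtain v where v: "v \<in> K" "v k = 1" "\<forall>i<k. v i = 0" unfolding seen_def by auto
  define S where "S = {i. k < i \<and> i \<le> B \<and> seen K i}"
  have finS: "finite S" unfolding S_def by auto
  define w where "w = v - (\<Sum>i\<in>S. scl (v i) (W i))"
  have Wz: "W i j = (if j = i then 1 else 0)" if "i \<in> S" "seen K j" for i j
    using W[of i] that unfolding S_def iswit_def by (cases "j < i") auto
  have Wlow: "W i j = 0" if "i \<in> S" "j \<le> k" for i j
    using W[of i] that unfolding S_def iswit_def by auto
  have "w \<in> K" unfolding w_def
    using W by (intro V.subspace_diff[OF K(1) v(1)] V.subspace_sum[OF K(1)] V.subspace_scale[OF K(1)])
      (auto simp: S_def iswit_def)
  moreover have "w j = v j" if "j \<le> k" for j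
    using that Wlow by (simp add: w_def sum_fun_apply)
  moreover have "w j = 0" if "j > k" "seen K j" for j
  proof -
    have jS: "j \<in> S" using that seen_le[OF K(2)] unfolding S_def by blast
    have "(\<Sum>i\<in>S. scl (v i) (W i)) j = (\<Sum>i\<in>S. v i * W i j)" by (simp add: sum_fun_apply)
    also have "\<dots> = (\<Sum>i\<in>S. if i = j then v i else 0)"
      using Wz[OF _ that(2)] by (intro sum.cong) auto
    also have "\<dots> = v j" using jS finS by simp
    finally show ?thesis by (simp add: w_def)
  qed
  ultimately have "iswit K k w" unfolding iswit_def using v by auto
  then show ?case by blast
qed

lemma wit_unique:
  assumes K: "V.subspace K" "K \<subseteq> VB B"
  and "iswit K k w1" "iswit K k w2" shows "w1 = w2"
proof (rule ccontr)
  assume ne: "w1 \<noteq> w2"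
  define d where "d = w1 - w2"
  have dK: "d \<in> K" using assms(3,4) unfolding d_def iswit_def by (auto intro: V.subspace_diff[OF K(1)])
  have d0: "d \<noteq> 0" using ne unfolding d_def by auto
  have dz: "d 0 = 0" using dK K(2) unfolding VB_def by auto
  obtain p where p: "d p \<noteq> 0" "\<forall>i<p. d i = 0" "seen K p" using lead_seen[OF K(1) dK d0 dz] by blast
  have "d i = 0" if "i \<le> k" for i using assms(3,4) that unfolding iswit_def d_def
    by (cases "i < k") auto
  then have "p > k" using p(1) by (meson not_le)
  then have "d p = 0" using p(3) assms(3,4) unfolding iswit_def d_def by auto
  then show False using p(1) by simp
qed

lemma witness_iswit:
  assumes K: "V.subspace K" "K \<subseteq> VB B" and "seen K k"
  shows "iswit K k (witness K k)"
proof -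
  obtain w where w: "iswit K k w" using wit_exists[OF K assms(3)] by blast
  have "witness K k = w" unfolding witness_def
  proof (rule the_equality)
    show "w \<in> K \<and> w k = 1 \<and> (\<forall>i<k. w i = 0) \<and> (\<forall>i>k. seen K i \<longrightarrow> w i = 0)"
      using w unfolding iswit_def by simp
  next
    fix w' assume "w' \<in> K \<and> w' k = 1 \<and> (\<forall>i<k. w' i = 0) \<and> (\<forall>i>k. seen K i \<longrightarrow> w' i = 0)"
    then have "iswit K k w'" unfolding iswit_def by simp
    then show "w' = w" using wit_unique[OF K] w by blast
  qed
  then show ?thesis using w by simp
qed

lemma witness_at_seen:
  assumes K: "V.subspace K" "K \<subseteq> VB B" and "seen K k" "seen K i"
  shows "witness K k i = (if i = k then 1 else 0)"
  using witness_iswit[OF K assms(3)] assms(4) unfolding iswit_def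
  by (cases "i < k") auto

lemma decode:
  assumes K: "V.subspace K" "K \<subseteq> VB M" and all: "\<forall>k. 1 \<le> k \<and> k \<le> M \<longrightarrow> seen K k"
  shows "decoding_event K"
  unfolding decoding_event_def decoded_def
proof (intro allI impI)
  fix k assume sk: "seen K k"
  have kM: "1 \<le> k" "k \<le> M" using seen_le[OF K(2) sk] by auto
  have w: "iswit K k (witness K k)" by (rule witness_iswit[OF K sk])
  have "witness K k = unitv k"
  proof
    fix i
    show "witness K k i = unitv k i"
    proof (cases "i \<le> M")
      case True
      then show ?thesis using w all kM unfolding iswit_def unitv_def
        by (cases "i < k"; cases "i = k") auto
    next
      case False
      have "witness K k \<in> VB M" using w K(2) unfolding iswit_def by auto
      then show ?thesis using False kM unfolding VB_def unitv_def by auto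
    qed
  qed
  then show "unitv k \<in> K" using w unfolding iswit_def by simp
qed




lemma seen_mono: "K \<subseteq> K' \<Longrightarrow> seen K k \<Longrightarrow> seen K' k"
  unfolding seen_def by blast


lemma one_new_aux:
  assumes p: "seen (V.span (insert w X)) p" "\<not> seen (V.span X) p"
    and q: "seen (V.span (insert w X)) q" "\<not> seen (V.span X) q" and pq: "p < q"
  shows False
proof -
  from p(1) obtain vp where vp: "vp \<in> V.span (insert w X)" "vp p = 1" "\<forall>i<p. vp i = 0" "p \<ge> 1"
    unfolding seen_def by auto
  from q(1) obtain vq where vq: "vq \<in> V.span (insert w X)" "vq q = 1" "\<forall>i<q. vq i = 0"
    unfolding seen_def by auto
  obtain a where a: "vp - scl a w \<in> V.span X" using vp(1) V.span_breakdown_eq by blast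
  obtain b where b: "vq - scl b w \<in> V.span X" using vq(1) V.span_breakdown_eq by blast
  have b0: "b \<noteq> 0"
  proof
    assume "b = 0"
    then have sb: "scl b w = 0" by (simp add: scl_def fun_eq_iff)
    have "vq \<in> V.span X" using b unfolding sb by simp
    then show False using q(2) vq unfolding seen_def using pq by auto
  qed
  define z where "z = (vp - scl a w) - scl (a / b) (vq - scl b w)"
  have zK: "z \<in> V.span X" unfolding z_def by (rule V.span_diff[OF a V.span_scale[OF b]])
  have zi: "z i = vp i - (a / b) * vq i" for i
    using b0 by (simp add: z_def algebra_simps)
  have "z p = 1" using zi[of p] vp(2) vq(3) pq by simp
  moreover have "\<forall>i<p. z i = 0" using zi vp(3) vq(3) pq by simp
  ultimately have "seen (V.span X) p" unfolding seen_def using zK vp(4) by blast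
  then show False using p(2) by simp
qed

lemma one_new:
  assumes "seen (V.span (insert w X)) p" "\<not> seen (V.span X) p"
    and "seen (V.span (insert w X)) q" "\<not> seen (V.span X) q"
  shows "p = q"
proof (rule ccontr)
  assume ne: "p \<noteq> q"
  show False
  proof (cases "p < q")
    case True
    then show False by (rule one_new_aux[OF assms])
  next
    case False
    then have "q < p" using ne by simp
    then show False by (rule one_new_aux[OF assms(3,4,1,2)])
  qed
qed

definition segm :: "(nat \<Rightarrow> 'a::field) set \<Rightarrow> nat \<Rightarrow> bool" where
  "segm K m \<longleftrightarrow> (\<forall>k. seen K k \<longleftrightarrow> 1 \<le> k \<and> k \<le> m)"

lemma segm_next: "segm K m \<Longrightarrow> next_unseen K = Suc m"
  unfolding next_unseen_def segm_def by (rule Least_equality) (auto simp: not_less_eq_eq)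

lemma segm_num: "segm K m \<Longrightarrow> num_seen K = m"
proof -
  assume "segm K m"
  then have "{k. seen K k} = {1..m}" unfolding segm_def atLeastAtMost_def atLeast_def atMost_def by blast
  then show ?thesis unfolding num_seen_def by (simp only: card_atLeastAtMost)
qed

lemma next_unseen_ge1:
  assumes "K \<subseteq> VB B" shows "next_unseen K \<ge> 1"
proof -
  have "\<not> seen K (Suc B)" using seen_le[OF assms] by fastforce
  then have "\<exists>k. k \<ge> 1 \<and> \<not> seen K k" by (intro exI[of _ "Suc B"]) auto
  then show ?thesis unfolding next_unseen_def by (rule LeastI2_ex) auto
qed

lemma sum_unitv_apply:
  assumes "finite U"
  shows "(\<Sum>u\<in>U. scl (\<alpha> u) (unitv u :: nat \<Rightarrow> 'a::field)) i = (if i \<in> U then \<alpha> i else 0)"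
proof -
  have "(\<Sum>u\<in>U. scl (\<alpha> u) (unitv u :: nat \<Rightarrow> 'a)) i = (\<Sum>u\<in>U. if u = i then \<alpha> u else 0)"
    unfolding sum_fun_apply by (rule sum.cong) (auto simp: unitv_def)
  also have "\<dots> = (if i \<in> U then \<alpha> i else 0)" using assms by (simp add: sum.delta)
  finally show ?thesis .
qed





lemma unitv_inj: "inj (unitv :: nat \<Rightarrow> nat \<Rightarrow> 'a::field)"
proof (rule injI)
  fix i k assume "(unitv i :: nat \<Rightarrow> 'a) = unitv k"
  then have "(unitv i :: nat \<Rightarrow> 'a) i = unitv k i" by simp
  then show "i = k" unfolding unitv_def by (cases "i = k") auto
qed

lemma unitv_indep: "V.independent (unitv ` S :: (nat \<Rightarrow> 'a::field) set)"
  unfolding V.independent_explicit_finite_subsets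
proof (intro allI impI ballI)
  fix T u v assume T: "T \<subseteq> unitv ` S" "finite T" and sum0: "(\<Sum>v\<in>T. scl (u v) v) = (0 :: nat \<Rightarrow> 'a)"
    and vT: "v \<in> T"
  obtain k where k: "v = unitv k" using T(1) vT by blast
  have "0 = (\<Sum>v\<in>T. scl (u v) v) k" using sum0 by simp
  also have "\<dots> = (\<Sum>v'\<in>T. u v' * v' k)" by (simp add: sum_fun_apply)
  also have "\<dots> = u v * v k + (\<Sum>v'\<in>T - {v}. u v' * v' k)" using T(2) vT by (simp add: sum.remove)
  also have "(\<Sum>v'\<in>T - {v}. u v' * v' k) = 0"
  proof (rule sum.neutral, rule ballI)
    fix v' assume v': "v' \<in> T - {v}"
    then obtain k' where "v' = unitv k'" using T(1) by blast
    then show "u v' * v' k = 0" using v' k unfolding unitv_def by auto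
  qed
  finally show "u v = 0" using k by (simp add: unitv_def)
qed

lemma VB_span: "VB a \<subseteq> V.span (unitv ` {1..a} :: (nat \<Rightarrow> 'a::field) set)"
proof
  fix v :: "nat \<Rightarrow> 'a" assume v: "v \<in> VB a"
  have "v = (\<Sum>i\<in>{1..a}. scl (v i) (unitv i))"
  proof
    fix j show "v j = (\<Sum>i\<in>{1..a}. scl (v i) (unitv i)) j"
      unfolding sum_unitv_apply[OF finite_atLeastAtMost] using v unfolding VB_def
      by (cases "j = 0"; cases "j \<le> a") auto
  qed
  also have "\<dots> \<in> V.span (unitv ` {1..a})"
    by (intro V.span_sum V.span_scale V.span_base) auto
  finally show "v \<in> V.span (unitv ` {1..a})" .
qed

context
  fixes n :: nat and A :: "nat \<Rightarrow> nat" and rcv :: "nat \<Rightarrow> nat \<Rightarrow> bool"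
    and c :: "nat \<Rightarrow> nat \<Rightarrow> 'a::field"
  assumes monoA: "mono A" and cod: "\<forall>s. coding_ok n (A s) (know rcv c s) (c s)"
begin

definition GG :: "nat \<Rightarrow> nat \<Rightarrow> (nat \<Rightarrow> 'a) set" where
  "GG s r = {c s' | s'. s' < s \<and> rcv s' r}"

lemma know_eq: "know rcv c s r = V.span (GG s r)"
  unfolding know_def GG_def kspan_V ..

lemma know_sub: "V.subspace (know rcv c s r)"
  unfolding know_eq by (rule V.subspace_span)

lemma coding_unf:
  obtains \<alpha> where
    "\<forall>u\<in>{next_unseen (know rcv c s r') | r'. r' < n \<and> next_unseen (know rcv c s r') \<le> A s}.
       \<forall>r'\<in>{r'. r' < n \<and> next_unseen (know rcv c s r') = u}.
        \<alpha> u \<noteq> (\<Sum>u'\<in>{u'\<in>{next_unseen (know rcv c s r') | r'. r' < n \<and> next_unseen (know rcv c s r') \<le> A s}. u' < u}.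
                  scl (\<alpha> u') (witness (know rcv c s r') u')) u"
    "c s = (\<Sum>u\<in>{next_unseen (know rcv c s r') | r'. r' < n \<and> next_unseen (know rcv c s r') \<le> A s}.
              scl (\<alpha> u) (unitv u))"
  using cod[rule_format, of s] unfolding coding_ok_def Let_def by blast

lemma c_VB: "c s \<in> VB (A s)"
proof (induction s rule: less_induct)
  case (less s)
  have KB: "know rcv c s r \<subseteq> VB (A s)" for r
    unfolding know_eq
  proof (rule V.span_minimal[OF _ VB_subspace])
    show "GG s r \<subseteq> VB (A s)"
    proof
      fix x assume "x \<in> GG s r"
      then obtain s' where s': "x = c s'" "s' < s" unfolding GG_def by blast
      then have "x \<in> VB (A s')" using less by blast
      moreover have "A s' \<le> A s" using monoA s'(2) by (simp add: monoD)
      ultimately show "x \<in> VB (A s)" using VB_mono by blast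
    qed
  qed
  define U where "U = {next_unseen (know rcv c s r') | r'. r' < n \<and> next_unseen (know rcv c s r') \<le> A s}"
  obtain \<alpha> where cs: "c s = (\<Sum>u\<in>U. scl (\<alpha> u) (unitv u))"
    using coding_unf[of s] unfolding U_def by blast
  have U1: "u \<in> U \<Longrightarrow> 1 \<le> u \<and> u \<le> A s" for u
    unfolding U_def using next_unseen_ge1[OF KB] by blast
  have finU: "finite U" using U1 by (meson finite_atMost finite_subset subsetI atMost_iff)
  have "c s i = (if i \<in> U then \<alpha> i else 0)" for i
    unfolding cs by (rule sum_unitv_apply[OF finU])
  then show ?case unfolding VB_def using U1 by fastforce
qed

lemma know_VB: "know rcv c s r \<subseteq> VB (A s)"
  unfolding know_eq
proof (rule V.span_minimal[OF _ VB_subspace])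
  show "GG s r \<subseteq> VB (A s)"
  proof
    fix x assume "x \<in> GG s r"
    then obtain s' where s': "x = c s'" "s' < s" unfolding GG_def by blast
    then have "x \<in> VB (A s')" using c_VB by blast
    moreover have "A s' \<le> A s" using monoA s'(2) by (simp add: monoD)
    ultimately show "x \<in> VB (A s)" using VB_mono by blast
  qed
qed

lemma know_mono: "s \<le> s' \<Longrightarrow> know rcv c s r \<subseteq> know rcv c s' r"
  unfolding know_eq GG_def by (rule V.span_mono) auto

lemma GG_Suc: "GG (Suc s) r = (if rcv s r then insert (c s) (GG s r) else GG s r)"
  unfolding GG_def by (auto simp: less_Suc_eq)


lemma step_seen:
  assumes r: "r < n" "rcv s r" and sg: "segm (know rcv c s r) m" and le: "Suc m \<le> A s"
  shows "seen (know rcv c (Suc s) r) (Suc m)"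
proof -
  define U where "U = {next_unseen (know rcv c s r') | r'. r' < n \<and> next_unseen (know rcv c s r') \<le> A s}"
  obtain \<alpha> where alpha: "\<forall>u\<in>U. \<forall>r'\<in>{r'. r' < n \<and> next_unseen (know rcv c s r') = u}.
        \<alpha> u \<noteq> (\<Sum>u'\<in>{u'\<in>U. u' < u}. scl (\<alpha> u') (witness (know rcv c s r') u')) u"
    and cs: "c s = (\<Sum>u\<in>U. scl (\<alpha> u) (unitv u))"
    using coding_unf[of s] unfolding U_def by blast
  have nu: "next_unseen (know rcv c s r) = Suc m" by (rule segm_next[OF sg])
  have U1: "u \<in> U \<Longrightarrow> 1 \<le> u \<and> u \<le> A s" for u
    unfolding U_def using next_unseen_ge1[OF know_VB] by blast
  have finU: "finite U" using U1 by (meson finite_atMost finite_subset subsetI atMost_iff)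
  have u0U: "Suc m \<in> U" unfolding U_def using r(1) nu le by force
  have csi: "c s i = (if i \<in> U then \<alpha> i else 0)" for i
    unfolding cs by (rule sum_unitv_apply[OF finU])
  define W where "W = witness (know rcv c s r)"
  define U' where "U' = {u'\<in>U. u' < Suc m}"
  define y where "y = (\<Sum>u'\<in>U'. scl (\<alpha> u') (W u'))"
  have ne: "\<alpha> (Suc m) \<noteq> y (Suc m)"
    using alpha u0U r(1) nu unfolding y_def U'_def W_def by auto
  have seenU': "u' \<in> U' \<Longrightarrow> seen (know rcv c s r) u'" for u'
    using sg U1 unfolding segm_def U'_def by auto
  have wit: "u' \<in> U' \<Longrightarrow> iswit (know rcv c s r) u' (W u')" for u'
    unfolding W_def by (rule witness_iswit[OF know_sub know_VB seenU'])
  have yK: "y \<in> know rcv c s r" unfolding y_def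
    using wit by (intro V.subspace_sum[OF know_sub] V.subspace_scale[OF know_sub]) (auto simp: iswit_def)
  have yi: "y i = (if i \<in> U then \<alpha> i else 0)" if "i \<le> m" for i
  proof (cases "i = 0")
    case True
    have "y i = (\<Sum>u'\<in>U'. \<alpha> u' * W u' i)" unfolding y_def by (simp add: sum_fun_apply)
    also have "\<dots> = 0"
    proof (rule sum.neutral, rule ballI)
      fix u' assume "u' \<in> U'"
      then have "W u' 0 = 0" using wit[of u'] U1[of u'] unfolding iswit_def U'_def by auto
      then show "\<alpha> u' * W u' i = 0" using True by simp
    qed
    finally show ?thesis using U1 True by auto
  next
    case False
    then have si: "seen (know rcv c s r) i" using sg that unfolding segm_def by auto
    have "y i = (\<Sum>u'\<in>U'. \<alpha> u' * W u' i)" unfolding y_def by (simp add: sum_fun_apply)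
    also have "\<dots> = (\<Sum>u'\<in>U'. if u' = i then \<alpha> u' else 0)"
      using witness_at_seen[OF know_sub know_VB seenU' si] unfolding W_def[symmetric]
      by (intro sum.cong) auto
    also have "\<dots> = (if i \<in> U' then \<alpha> i else 0)"
      using finU unfolding U'_def by (simp add: sum.delta)
    finally show ?thesis using that unfolding U'_def by auto
  qed
  define z where "z = c s - y"
  have zK: "z \<in> know rcv c (Suc s) r"
  proof -
    have "c s \<in> know rcv c (Suc s) r" unfolding know_eq GG_Suc using r(2) by (simp add: V.span_base)
    moreover have "y \<in> know rcv c (Suc s) r" using yK know_mono[of s "Suc s" r] by auto
    ultimately show ?thesis unfolding z_def by (rule V.subspace_diff[OF know_sub])
  qed
  have zlow: "\<forall>i<Suc m. z i = 0" using yi csi unfolding z_def by simp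
  have zu: "z (Suc m) \<noteq> 0" using ne csi u0U unfolding z_def by simp
  define z' where "z' = scl (inverse (z (Suc m))) z"
  have "z' \<in> know rcv c (Suc s) r" unfolding z'_def by (rule V.subspace_scale[OF know_sub zK])
  moreover have "z' (Suc m) = 1" using zu unfolding z'_def by simp
  moreover have "\<forall>i<Suc m. z' i = 0" using zlow unfolding z'_def by simp
  ultimately show ?thesis unfolding seen_def by auto
qed

lemma segm_inv: "r < n \<Longrightarrow> \<exists>m. segm (know rcv c s r) m"
proof (induction s)
  case 0
  have "know rcv c 0 r = {0}" unfolding know_eq GG_def by simp
  then have "segm (know rcv c 0 r) 0" unfolding segm_def seen_def by auto
  then show ?case by blast
next
  case (Suc s)
  then obtain m where sg: "segm (know rcv c s r) m" by blast
  show ?case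
  proof (cases "rcv s r")
    case False
    then have "know rcv c (Suc s) r = know rcv c s r" unfolding know_eq GG_Suc by simp
    then show ?thesis using sg by auto
  next
    case True
    have eqK: "know rcv c (Suc s) r = V.span (insert (c s) (GG s r))" unfolding know_eq GG_Suc using True by simp
    have mono1: "seen (know rcv c s r) k \<Longrightarrow> seen (know rcv c (Suc s) r) k" for k
      using seen_mono[OF know_mono[of s "Suc s" r]] by simp
    show ?thesis
    proof (cases "Suc m \<le> A s")
      case True2: True
      have new: "seen (know rcv c (Suc s) r) (Suc m)" by (rule step_seen[OF Suc.prems True sg True2])
      have "segm (know rcv c (Suc s) r) (Suc m)" unfolding segm_def
      proof (intro allI iffI)
        fix k assume sk: "seen (know rcv c (Suc s) r) k"
        show "1 \<le> k \<and> k \<le> Suc m"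
        proof (cases "seen (know rcv c s r) k")
          case True
          then show ?thesis using sg unfolding segm_def by auto
        next
          case False
          have "\<not> seen (know rcv c s r) (Suc m)" using sg unfolding segm_def by auto
          have sk': "seen (V.span (insert (c s) (GG s r))) k" using sk eqK by simp
          have new': "seen (V.span (insert (c s) (GG s r))) (Suc m)" using new eqK by simp
          have F': "\<not> seen (V.span (GG s r)) k" using False know_eq by simp
          have F2: "\<not> seen (V.span (GG s r)) (Suc m)" using \<open>\<not> seen (know rcv c s r) (Suc m)\<close> know_eq by simp
          have "k = Suc m" by (rule one_new[OF sk' F' new' F2])
          then show ?thesis by simp
        qed
      next
        fix k assume "1 \<le> k \<and> k \<le> Suc m"
        then show "seen (know rcv c (Suc s) r) k"
          using new mono1 sg unfolding segm_def by (cases "k = Suc m") auto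
      qed
      then show ?thesis by blast
    next
      case False2: False
      have "GG s r \<subseteq> VB (A s)" using know_VB[of s r] V.span_superset[of "GG s r"] unfolding know_eq by blast
      then have "insert (c s) (GG s r) \<subseteq> VB (A s)" using c_VB[of s] by blast
      then have "know rcv c (Suc s) r \<subseteq> VB (A s)" unfolding eqK by (rule V.span_minimal[OF _ VB_subspace])
      then have "segm (know rcv c (Suc s) r) m" unfolding segm_def
        using seen_le[of "know rcv c (Suc s) r" "A s"] False2 mono1 sg unfolding segm_def by fastforce
      then show ?thesis by blast
    qed
  qed
qed


lemma GG_Suc_sub: "\<forall>s\<le>t. c s \<in> VB b \<Longrightarrow> know rcv c (Suc t) j \<subseteq> VB b"
  unfolding know_eq by (rule V.span_minimal[OF _ VB_subspace]) (auto simp: GG_def)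

lemma c_VB_t: "s \<le> t \<Longrightarrow> c s \<in> VB (A t)"
  using c_VB[of s] VB_mono monoA by (meson monoD subsetD)

lemma case_b:
  assumes j: "j < n" "rcv t j" and lead: "is_leader n (know rcv c t) j"
  shows "decoding_event (know rcv c (Suc t) j)"
proof -
  obtain mj where sj: "segm (know rcv c t j) mj" using segm_inv[OF j(1)] by blast
  have bnd: "\<forall>s\<le>t. c s \<in> VB (Suc mj)"
  proof (intro allI impI)
    fix s assume st: "s \<le> t"
    define U where "U = {next_unseen (know rcv c s r') | r'. r' < n \<and> next_unseen (know rcv c s r') \<le> A s}"
    obtain \<alpha> where cs: "c s = (\<Sum>u\<in>U. scl (\<alpha> u) (unitv u))"
      using coding_unf[of s] unfolding U_def by blast
    have U1: "1 \<le> u \<and> u \<le> Suc mj" if uU: "u \<in> U" for u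
    proof -
      obtain r' where r': "r' < n" "u = next_unseen (know rcv c s r')" using uU unfolding U_def by blast
      obtain m' where sm: "segm (know rcv c s r') m'" using segm_inv[OF r'(1)] by blast
      obtain mt where smt: "segm (know rcv c t r') mt" using segm_inv[OF r'(1)] by blast
      have "m' \<le> mt"
      proof (cases "m' = 0")
        case False
        then have "seen (know rcv c s r') m'" using sm unfolding segm_def by auto
        then have "seen (know rcv c t r') m'" using seen_mono[OF know_mono[OF st]] by blast
        then show ?thesis using smt unfolding segm_def by auto
      qed simp
      moreover have "mt \<le> mj" using lead r'(1) segm_num[OF smt] segm_num[OF sj]
        unfolding is_leader_def by metis
      ultimately show ?thesis using segm_next[OF sm] r'(2) by simp
    qed
    have finU: "finite U" using U1 by (meson finite_atMost finite_subset subsetI atMost_iff)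
    have "c s i = (if i \<in> U then \<alpha> i else 0)" for i
      unfolding cs by (rule sum_unitv_apply[OF finU])
    then show "c s \<in> VB (Suc mj)" unfolding VB_def using U1 by fastforce
  qed
  have KB1: "know rcv c (Suc t) j \<subseteq> VB (Suc mj)" by (rule GG_Suc_sub[OF bnd])
  have KB2: "know rcv c (Suc t) j \<subseteq> VB (A t)" by (rule GG_Suc_sub) (auto intro: c_VB_t)
  have mono1: "seen (know rcv c t j) k \<Longrightarrow> seen (know rcv c (Suc t) j) k" for k
    using seen_mono[OF know_mono[of t "Suc t" j]] by simp
  show ?thesis
  proof (cases "Suc mj \<le> A t")
    case True
    have new: "seen (know rcv c (Suc t) j) (Suc mj)" by (rule step_seen[OF j sj True])
    show ?thesis
    proof (rule decode[OF know_sub KB1], intro allI impI)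
      fix k assume "1 \<le> k \<and> k \<le> Suc mj"
      then show "seen (know rcv c (Suc t) j) k"
        using new mono1 sj unfolding segm_def by (cases "k = Suc mj") auto
    qed
  next
    case False
    have "know rcv c (Suc t) j \<subseteq> VB mj" using KB2 VB_mono[of "A t" mj] False by auto
    then show ?thesis
    proof (rule decode[OF know_sub], intro allI impI)
      fix k assume "1 \<le> k \<and> k \<le> mj"
      then show "seen (know rcv c (Suc t) j) k" using mono1 sj unfolding segm_def by auto
    qed
  qed
qed


lemma case_a:
  assumes vq: "vqueue (A t) (know rcv c (Suc t) j) = 0"
  shows "decoding_event (know rcv c (Suc t) j)"
proof -
  define K where "K = know rcv c (Suc t) j"
  define a where "a = A t"
  define W where "W = (unitv ` {1..a} :: (nat \<Rightarrow> 'a) set)"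
  have KB: "K \<subseteq> VB a" unfolding K_def a_def by (rule GG_Suc_sub) (auto intro: c_VB_t)
  have KS: "K \<subseteq> V.span W" using KB VB_span unfolding W_def by blast
  have cardW: "card W = a" unfolding W_def
    using card_image[OF inj_on_subset[OF unitv_inj subset_UNIV], of "{1..a}"] by simp
  have "V.dim W = card W" unfolding W_def by (rule V.dim_eq_card_independent[OF unitv_indep])
  then have dimS: "V.dim (V.span W) = a" using cardW by simp
  have dimle: "a \<le> V.dim K" using vq dimS unfolding vqueue_def K_def a_def sender_space_def kspan_V kdim_V W_def
    by simp
  have Ksub: "V.subspace K" unfolding K_def by (rule know_sub)
  have all: "unitv k \<in> K" if k: "k \<in> {1..a}" for k
  proof (rule ccontr)
    assume nk: "unitv k \<notin> K"
    obtain B where B: "B \<subseteq> K" "V.independent B" "K \<subseteq> V.span B" "card B = V.dim K"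
      using V.basis_exists by blast
    have "V.span B \<subseteq> K" using B(1) Ksub by (rule V.span_minimal)
    then have nB: "unitv k \<notin> V.span B" using nk by blast
    have ind: "V.independent (insert (unitv k) B)" by (rule V.independent_insertI[OF nB B(2)])
    have "insert (unitv k) B \<subseteq> V.span W" using B(1) KS k unfolding W_def by (auto intro: V.span_base)
    from V.independent_span_bound[OF _ ind this]
    have fb: "finite (insert (unitv k) B)" "card (insert (unitv k) B) \<le> card W" unfolding W_def by auto
    have nB': "unitv k \<notin> B" using nB V.span_base by blast
    have "card (insert (unitv k) B) = Suc (card B)" using fb(1) nB' by (simp add: card_insert_disjoint)
    then show False using fb(2) cardW B(4) dimle by simp
  qed
  show ?thesis unfolding K_def[symmetric] decoding_event_def decoded_def
    using all seen_le[OF KB] by auto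
qed

end


theorem theorem10:
  fixes n :: nat and A :: "nat \<Rightarrow> nat" and rcv :: "nat \<Rightarrow> nat \<Rightarrow> bool"
    and c :: "nat \<Rightarrow> nat \<Rightarrow> 'a::{field,finite}" and t j :: nat
  assumes "card (UNIV :: 'a set) \<ge> n"
    and "mono A"
    and "\<forall>s. coding_ok n (A s) (know rcv c s) (c s)"
    and "j < n"
    and "rcv t j"
    and "vqueue (A t) (know rcv c (Suc t) j) = 0 \<or> is_leader n (know rcv c t) j"
  shows "decoding_event (know rcv c (Suc t) j)"
  using assms(6)
proof
  assume "vqueue (A t) (know rcv c (Suc t) j) = 0"
  then show ?thesis by (rule case_a[OF assms(2) assms(3)])
next
  assume "is_leader n (know rcv c t) j"
  then show ?thesis by (rule case_b[OF assms(2) assms(3) assms(4) assms(5)])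
qed

end
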